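(* Let $\mathcal{H}$ be a real Hilbert space, let $A:\mathcal{H}\rightrightarrows\mathcal{H}$ be maximal monotone with $A^{-1}(0)\neq\emptyset$, let $\theta>0$, let $p\geq1$ be an integer, and let $(x,\lambda):[0,+\infty)\to\mathcal{H}\times(0,+\infty)$ be a global solution of \[ \dot{x}(t)+x(t)-(I+\lambda(t)A)^{-1}x(t)=0,\qquad \lambda(t)\,\|(I+\lambda(t)A)^{-1}x(t)-x(t)\|^{p-1}=\theta, \] with $x(0)\in\{x\in\mathcal{H}:0\notin Ax\}$. Assume the error bound condition: there exist $\delta>0$ and $\kappa>0$ such that for all $x\in\mathcal{H}$, $\textsc{dist}(0,Ax)\leq\delta$ implies $\textsc{dist}(x,A^{-1}(0))\leq\kappa\,\textsc{dist}(0,Ax)$. Then there exist a sufficiently large $t_0>0$ and a constant $c>0$ with $c\leq 2\left(1+\frac{\kappa}{\lambda(0)}\right)^{-2}$ such that $\textsc{dist}(x(t),A^{-1}(0))=O(e^{-ct/2})$ for all $t>t_0$.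
   Context: $\textsc{dist}(x,S)=\inf_{z\in S}\|x-z\|$; $A^{-1}(0)=\{x:0\in Ax\}$; $(I+\lambda A)^{-1}$ is the resolvent of $A$ of index $\lambda$. *)

theory Defs
  imports "HOL-Analysis.Analysis"
begin

definition monotone_op :: "('a::real_inner \<Rightarrow> 'a set) \<Rightarrow> bool" where
  "monotone_op A \<longleftrightarrow>
     (\<forall>x y u v. u \<in> A x \<longrightarrow> v \<in> A y \<longrightarrow> inner (x - y) (u - v) \<ge> 0)"

definition maximal_monotone :: "('a::real_inner \<Rightarrow> 'a set) \<Rightarrow> bool" where
  "maximal_monotone A \<longleftrightarrow> monotone_op A \<and>
     (\<forall>B. monotone_op B \<and> (\<forall>x. A x \<subseteq> B x) \<longrightarrow> B = A)"

definition zeros :: "('a::real_vector \<Rightarrow> 'a set) \<Rightarrow> 'a set" where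
  "zeros A = {x. 0 \<in> A x}"

text \<open>Resolvent (I + lambda A)^{-1} x: the (unique, for maximal monotone A and lambda > 0)
  y with x \<in> y + lambda A y.\<close>
definition resolvent :: "('a::real_vector \<Rightarrow> 'a set) \<Rightarrow> real \<Rightarrow> 'a \<Rightarrow> 'a" where
  "resolvent A lam x = (THE y. \<exists>u \<in> A y. x = y + lam *\<^sub>R u)"

end

theory Submission
  imports Defs
begin

lemma monotone_sum_ineq:
  fixes a b :: "'i \<Rightarrow> 'a::real_inner"
  assumes fin: "finite G" and mono: "\<And>g h. g \<in> G \<Longrightarrow> h \<in> G \<Longrightarrow> inner (a g - a h) (b g - b h) \<ge> 0"
    and mu: "\<And>g. g \<in> G \<Longrightarrow> \<mu> g \<ge> 0" and s1: "sum \<mu> G = 1"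
  shows "inner (\<Sum>g\<in>G. \<mu> g *\<^sub>R a g) (\<Sum>g\<in>G. \<mu> g *\<^sub>R b g) \<le> (\<Sum>g\<in>G. \<mu> g * inner (a g) (b g))"
proof -
  let ?A = "\<Sum>g\<in>G. \<mu> g *\<^sub>R a g" and ?B = "\<Sum>g\<in>G. \<mu> g *\<^sub>R b g"
  have 0: "0 \<le> (\<Sum>g\<in>G. \<Sum>h\<in>G. \<mu> g * \<mu> h * inner (a g - a h) (b g - b h))"
    by (intro sum_nonneg) (simp add: mu mono)
  have 1: "(\<Sum>g\<in>G. \<Sum>h\<in>G. \<mu> g * \<mu> h * inner (a g - a h) (b g - b h)) = (\<Sum>g\<in>G. \<Sum>h\<in>G. \<mu> g * \<mu> h * inner (a g) (b g)) + (\<Sum>g\<in>G. \<Sum>h\<in>G. \<mu> g * \<mu> h * inner (a h) (b h))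
       - (\<Sum>g\<in>G. \<Sum>h\<in>G. \<mu> g * \<mu> h * inner (a g) (b h)) - (\<Sum>g\<in>G. \<Sum>h\<in>G. \<mu> g * \<mu> h * inner (a h) (b g))"
    by (simp add: sum.distrib sum_subtractf inner_diff_left inner_diff_right algebra_simps)
  have 2: "(\<Sum>g\<in>G. \<Sum>h\<in>G. \<mu> g * \<mu> h * inner (a h) (b g)) = (\<Sum>g\<in>G. \<Sum>h\<in>G. \<mu> g * \<mu> h * inner (a g) (b h))"
    by (subst sum.swap) (simp add: mult.commute)
  have 3: "(\<Sum>g\<in>G. \<Sum>h\<in>G. \<mu> g * \<mu> h * inner (a h) (b h)) = (\<Sum>g\<in>G. \<Sum>h\<in>G. \<mu> g * \<mu> h * inner (a g) (b g))"
    by (subst sum.swap) (simp add: mult.commute)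
  have 4: "(\<Sum>g\<in>G. \<Sum>h\<in>G. \<mu> g * \<mu> h * inner (a g) (b g)) = (\<Sum>g\<in>G. \<mu> g * inner (a g) (b g))"
    by (simp add: sum_distrib_right[symmetric] mult.commute mult.left_commute sum_distrib_left[symmetric] s1)
  have 5: "(\<Sum>g\<in>G. \<Sum>h\<in>G. \<mu> g * \<mu> h * inner (a g) (b h)) = inner ?A ?B"
    by (simp add: inner_sum_left inner_sum_right sum_distrib_left mult.assoc, subst sum.swap, simp add: mult.left_commute)
  show ?thesis using 0 unfolding 1 2 3 4 5 by simp
qed

lemma quad_ident:
  fixes w m :: "'a::real_inner"
  shows "(norm ((1-s) *\<^sub>R w + s *\<^sub>R m))\<^sup>2 = (norm w)\<^sup>2 + 2 * s * (inner w (m - w)) + s\<^sup>2 * (norm (m-w))\<^sup>2"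
proof -
  have e: "(1-s) *\<^sub>R w + s *\<^sub>R m = w + s *\<^sub>R (m - w)" by (simp add: algebra_simps)
  show ?thesis unfolding e power2_norm_eq_inner
    by (simp add: inner_add_left inner_add_right inner_commute power2_eq_square algebra_simps)
qed

lemma phi_ident:
  fixes w a b x :: "'a::real_inner"
  shows "- inner (w - a) (x - w - b) = (norm w)\<^sup>2 - 2 * inner w ((1/2) *\<^sub>R (x + a - b)) + inner a (x - b)"
  by (simp add: power2_norm_eq_inner inner_add_left inner_add_right inner_diff_left inner_diff_right inner_commute algebra_simps)

lemma finite_ext:
  fixes G :: "('a::real_inner \<times> 'a) set" and x :: 'a
  assumes fin: "finite G"
    and mono: "\<And>g h. g \<in> G \<Longrightarrow> h \<in> G \<Longrightarrow> inner (fst g - fst h) (snd g - snd h) \<ge> 0"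
  shows "\<exists>y. \<forall>g\<in>G. inner (y - fst g) (x - y - snd g) \<ge> 0"
proof (cases "G = {}")
  case True then show ?thesis by simp
next
  case False
  define m where "m g = (1/2) *\<^sub>R (x + fst g - snd g)" for g
  define k where "k g = inner (fst g) (x - snd g)" for g
  define q where "q g = (m g, k g)" for g
  define F where "F = (\<lambda>p::'a\<times>real. snd p - (norm (fst p))\<^sup>2)"
  define K' where "K' = {p. \<exists>\<mu>. (\<forall>g\<in>G. \<mu> g \<ge> 0) \<and> sum \<mu> G = 1 \<and> p = (\<Sum>g\<in>G. \<mu> g *\<^sub>R q g)}"
  define K where "K = convex hull (q ` G)"
  have "convex K'"
    unfolding convex_def
  proof (intro ballI allI impI)
    fix p1 p2 and u v :: real
    assume "p1 \<in> K'" "p2 \<in> K'" and uv: "0 \<le> u" "0 \<le> v" "u + v = 1"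
    then obtain \<mu>1 \<mu>2 where m1: "\<forall>g\<in>G. \<mu>1 g \<ge> 0" "sum \<mu>1 G = 1" "p1 = (\<Sum>g\<in>G. \<mu>1 g *\<^sub>R q g)"
      and m2: "\<forall>g\<in>G. \<mu>2 g \<ge> 0" "sum \<mu>2 G = 1" "p2 = (\<Sum>g\<in>G. \<mu>2 g *\<^sub>R q g)"
      unfolding K'_def by blast
    show "u *\<^sub>R p1 + v *\<^sub>R p2 \<in> K'"
      unfolding K'_def
    proof (intro CollectI exI[of _ "\<lambda>g. u * \<mu>1 g + v * \<mu>2 g"] conjI ballI)
      show "0 \<le> u * \<mu>1 g + v * \<mu>2 g" if "g \<in> G" for g using m1 m2 uv that by simp
      show "(\<Sum>g\<in>G. u * \<mu>1 g + v * \<mu>2 g) = 1"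
        using m1 m2 uv by (simp add: sum.distrib sum_distrib_left[symmetric])
      show "u *\<^sub>R p1 + v *\<^sub>R p2 = (\<Sum>g\<in>G. (u * \<mu>1 g + v * \<mu>2 g) *\<^sub>R q g)"
        using m1 m2 by (simp add: scaleR_sum_right scaleR_add_left sum.distrib)
    qed
  qed
  have "q ` G \<subseteq> K'"
  proof
    fix p assume "p \<in> q ` G"
    then obtain g0 where g0: "g0 \<in> G" "p = q g0" by auto
    show "p \<in> K'"
      unfolding K'_def
    proof (intro CollectI exI[of _ "\<lambda>g. if g = g0 then 1 else 0"] conjI)
      have e: "(\<lambda>g. (if g = g0 then 1 else 0) *\<^sub>R q g) = (\<lambda>g. if g = g0 then q g else 0)" by auto
      show "p = (\<Sum>g\<in>G. (if g = g0 then 1 else 0) *\<^sub>R q g)" unfolding e using g0 fin by simp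
    qed (use g0 fin in auto)
  qed
  then have KK': "K \<subseteq> K'" unfolding K_def using \<open>convex K'\<close> by (simp add: hull_minimal)
  have Kc: "compact K" unfolding K_def using fin by (simp add: finite_imp_compact_convex_hull)
  have Kne: "K \<noteq> {}" unfolding K_def using False by simp
  have Kcv: "convex K" unfolding K_def by simp
  have qK: "q g \<in> K" if "g \<in> G" for g unfolding K_def using that by (simp add: hull_inc)
  have Fc: "continuous_on K F" unfolding F_def by (intro continuous_intros)
  obtain ps where ps: "ps \<in> K" "\<And>p. p \<in> K \<Longrightarrow> F p \<le> F ps"
    using continuous_attains_sup[OF Kc Kne Fc] by blast
  have claim1: "F p \<le> 0" if "p \<in> K'" for p
  proof -
    obtain \<mu> where mu: "\<forall>g\<in>G. \<mu> g \<ge> 0" "sum \<mu> G = 1" "p = (\<Sum>g\<in>G. \<mu> g *\<^sub>R q g)"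
      using \<open>p \<in> K'\<close> unfolding K'_def by blast
    define A where "A = (\<Sum>g\<in>G. \<mu> g *\<^sub>R fst g)"
    define B where "B = (\<Sum>g\<in>G. \<mu> g *\<^sub>R snd g)"
    have ineq: "inner A B \<le> (\<Sum>g\<in>G. \<mu> g * inner (fst g) (snd g))"
      unfolding A_def B_def using monotone_sum_ineq[where a=fst and b=snd and G=G and \<mu>=\<mu>, OF fin mono] mu by simp
    have pw: "\<mu> g *\<^sub>R m g = (1/2) *\<^sub>R (\<mu> g *\<^sub>R x + \<mu> g *\<^sub>R fst g - \<mu> g *\<^sub>R snd g)" for g
      by (simp add: m_def algebra_simps)
    have fp: "fst p = (1/2) *\<^sub>R (x + A - B)"
    proof -
      have "fst p = (\<Sum>g\<in>G. \<mu> g *\<^sub>R m g)" using mu(3) by (simp add: fst_sum q_def)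
      also have "\<dots> = (1/2) *\<^sub>R ((\<Sum>g\<in>G. \<mu> g *\<^sub>R x) + A - B)"
        unfolding pw A_def B_def by (simp add: scaleR_sum_right[symmetric] sum.distrib sum_subtractf)
      also have "(\<Sum>g\<in>G. \<mu> g *\<^sub>R x) = x" using mu(2) by (simp add: scaleR_sum_left[symmetric])
      finally show ?thesis .
    qed
    have sp: "snd p = inner A x - (\<Sum>g\<in>G. \<mu> g * inner (fst g) (snd g))"
      using mu(2,3) by (simp add: snd_sum q_def k_def A_def inner_sum_left inner_diff_right
          sum_subtractf algebra_simps sum_distrib_left)
    have "F p = inner A x - (\<Sum>g\<in>G. \<mu> g * inner (fst g) (snd g)) - (norm ((1/2) *\<^sub>R (x + A - B)))\<^sup>2"
      unfolding F_def fp sp by simp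
    also have "\<dots> \<le> inner A x - inner A B - (norm ((1/2) *\<^sub>R (x + A - B)))\<^sup>2"
      using ineq by simp
    also have "\<dots> = - (norm ((1/2) *\<^sub>R (x - A - B)))\<^sup>2"
      by (simp add: power2_norm_eq_inner inner_add_left inner_add_right inner_diff_left inner_diff_right
          inner_commute algebra_simps)
    also have "\<dots> \<le> 0" by simp
    finally show ?thesis .
  qed
  define w where "w = fst ps"
  have Fps: "F ps \<le> 0" using claim1 KK' ps(1) by blast
  have claim2: "- inner (w - fst g) (x - w - snd g) \<le> F ps" if g: "g \<in> G" for g
  proof (rule ccontr)
    define d where "d = - inner (w - fst g) (x - w - snd g) - F ps"
    define N where "N = (norm (m g - w))\<^sup>2"
    assume "\<not> ?thesis"
    then have dpos: "d > 0" unfolding d_def by simp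
    define s where "s = min 1 (d / (2 * (N + 1)))"
    have Nnn: "N \<ge> 0" unfolding N_def by simp
    have s0: "s > 0" unfolding s_def using dpos Nnn by simp
    have s1: "s \<le> 1" unfolding s_def by simp
    have sN: "s * N < d"
    proof -
      have "s * N \<le> d / (2 * (N + 1)) * N" unfolding s_def using Nnn
        by (intro mult_right_mono) auto
      also have "\<dots> < d" using dpos Nnn by (simp add: field_simps) (smt (verit) mult_nonneg_nonneg)
      finally show ?thesis .
    qed
    have inK: "(1 - s) *\<^sub>R ps + s *\<^sub>R q g \<in> K"
      using convexD[OF Kcv ps(1) qK[OF g], of "1 - s" s] s0 s1 by simp
    have e1: "fst ((1 - s) *\<^sub>R ps + s *\<^sub>R q g) = (1-s) *\<^sub>R w + s *\<^sub>R m g" by (simp add: w_def q_def)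
    have e2: "snd ((1 - s) *\<^sub>R ps + s *\<^sub>R q g) = (1-s) * snd ps + s * k g" by (simp add: q_def)
    have e3: "- inner (w - fst g) (x - w - snd g) = (norm w)\<^sup>2 - 2 * inner w (m g) + k g"
      unfolding phi_ident m_def k_def ..
    have e4: "inner w (m g - w) = inner w (m g) - (norm w)\<^sup>2" by (simp add: inner_diff_right power2_norm_eq_inner)
    have ident: "F ((1 - s) *\<^sub>R ps + s *\<^sub>R q g) = F ps + s * d - s\<^sup>2 * N"
      unfolding F_def e1 e2 d_def N_def e3 quad_ident e4 by (simp add: w_def algebra_simps)
    have "F ps + s * d - s\<^sup>2 * N \<le> F ps" using ps(2)[OF inK] ident by simp
    then have "s * d \<le> s * (s * N)" by (simp add: power2_eq_square algebra_simps)
    then have "d \<le> s * N" using s0 by simp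
    then show False using sN by simp
  qed
  show ?thesis
  proof (intro exI[of _ w] ballI)
    fix g assume "g \<in> G"
    from claim2[OF this] Fps show "0 \<le> inner (w - fst g) (x - w - snd g)" by simp
  qed
qed

lemma parallelogram_mid:
  fixes y z :: "'a::real_inner"
  shows "(norm (y - z))\<^sup>2 = 2 * (norm y)\<^sup>2 + 2 * (norm z)\<^sup>2 - 4 * (norm ((1/2) *\<^sub>R y + (1/2) *\<^sub>R z))\<^sup>2"
  unfolding power2_norm_eq_inner
  by (simp add: inner_add_left inner_add_right inner_diff_left inner_diff_right inner_commute algebra_simps)

lemma key_bound:
  fixes y z :: "'a::real_inner" and s e v :: real
  assumes "s \<ge> 0" "e > 0" "s - e \<le> m" "0 \<le> m"
    and "norm y \<le> s + e" "norm z \<le> s + e" "m \<le> norm ((1/2) *\<^sub>R y + (1/2) *\<^sub>R z)"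
  shows "(norm (y - z))\<^sup>2 \<le> 16 * e * (s + e)"
proof -
  let ?M = "norm ((1/2) *\<^sub>R y + (1/2) *\<^sub>R z)"
  have y2: "(norm y)\<^sup>2 \<le> (s + e)\<^sup>2" using assms by (intro power_mono) auto
  have z2: "(norm z)\<^sup>2 \<le> (s + e)\<^sup>2" using assms by (intro power_mono) auto
  have P: "(norm (y - z))\<^sup>2 = 2 * (norm y)\<^sup>2 + 2 * (norm z)\<^sup>2 - 4 * ?M\<^sup>2" by (rule parallelogram_mid)
  show ?thesis
  proof (cases "s \<ge> e")
    case True
    have "(s - e)\<^sup>2 \<le> ?M\<^sup>2" using True assms by (intro power_mono) auto
    then have "(norm (y - z))\<^sup>2 \<le> 4*(s+e)\<^sup>2 - 4*(s-e)\<^sup>2" using P y2 z2 by linarith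
    also have "4*(s+e)\<^sup>2 - 4*(s-e)\<^sup>2 = 16 * e * s" by (simp add: power2_eq_square algebra_simps)
    also have "\<dots> \<le> 16 * e * (s + e)" using assms by (intro mult_left_mono) auto
    finally show ?thesis .
  next
    case False
    have "0 \<le> ?M\<^sup>2" by simp
    then have "(norm (y - z))\<^sup>2 \<le> 4*(s+e)\<^sup>2" using P y2 z2 by linarith
    also have "(s+e) * (4*(s+e)) \<le> (s+e) * (16*e)" using False assms by (intro mult_left_mono) auto
    then have "4*(s+e)\<^sup>2 \<le> 16 * e * (s + e)" by (simp add: power2_eq_square algebra_simps)
    finally show ?thesis .
  qed
qed

lemma ball_FIP:
  fixes c :: "'i \<Rightarrow> 'a::{real_inner,complete_space}" and r :: "'i \<Rightarrow> real"
  assumes Gne: "G \<noteq> {}"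
    and fip: "\<And>F. finite F \<Longrightarrow> F \<subseteq> G \<Longrightarrow> (\<Inter>g\<in>F. cball (c g) (r g)) \<noteq> {}"
  shows "(\<Inter>g\<in>G. cball (c g) (r g)) \<noteq> {}"
proof -
  define I where "I F = (\<Inter>g\<in>F. cball (c g) (r g))" for F
  define FF where "FF = {F. finite F \<and> F \<subseteq> G}"
  define v where "v F = Inf (norm ` I F)" for F
  have Ine: "I F \<noteq> {}" if "F \<in> FF" for F using fip that unfolding I_def FF_def by auto
  have bdd: "bdd_below (norm ` I F)" for F by (rule bdd_belowI[of _ 0]) auto
  have Imono: "F \<subseteq> F' \<Longrightarrow> I F' \<subseteq> I F" for F F' unfolding I_def by auto
  have vmono: "v F \<le> v F'" if "F' \<in> FF" "F \<subseteq> F'" for F F'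
    unfolding v_def using Ine[OF that(1)] bdd Imono[OF that(2)] by (intro cInf_superset_mono) auto
  have vlow: "v F \<le> norm y" if "y \<in> I F" for F y
    unfolding v_def using bdd that by (intro cInf_lower) auto
  have vnn: "0 \<le> v F" if "F \<in> FF" for F
    unfolding v_def using Ine[OF that] by (intro cInf_greatest) auto
  have vapprox: "\<exists>y\<in>I F. norm y < v F + e" if "F \<in> FF" "e > 0" for F e
  proof -
    have "Inf (norm ` I F) < v F + e" using that unfolding v_def by simp
    then show ?thesis using Ine[OF that(1)] bdd by (subst (asm) cInf_less_iff) auto
  qed
  have Icv: "convex (I F)" for F unfolding I_def by (intro convex_INT convex_cball)
  have Icl: "closed (I F)" for F unfolding I_def by (simp add: closed_INT)
  obtain g0 where g0: "g0 \<in> G" using Gne by auto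
  have FFins: "insert g F \<in> FF" if "F \<in> FF" "g \<in> G" for F g using that unfolding FF_def by auto
  have vbound: "v F \<le> norm (c g0) + r g0" if FFF: "F \<in> FF" for F
  proof -
    obtain y where y: "y \<in> I (insert g0 F)" using Ine[OF FFins[OF FFF g0]] by auto
    then have "dist (c g0) y \<le> r g0" unfolding I_def by auto
    moreover have "norm y \<le> norm (c g0) + dist (c g0) y"
      by (metis dist_norm norm_minus_commute norm_triangle_sub)
    ultimately have "norm y \<le> norm (c g0) + r g0" by simp
    moreover have "v F \<le> v (insert g0 F)" using vmono[OF FFins[OF FFF g0]] by auto
    ultimately show ?thesis using vlow[OF y] by simp
  qed
  define s where "s = Sup (v ` FF)"
  have FFne: "{} \<in> FF" unfolding FF_def by auto
  have bdda: "bdd_above (v ` FF)" using vbound by (intro bdd_aboveI[of _ "norm (c g0) + r g0"]) auto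
  have vs: "v F \<le> s" if "F \<in> FF" for F unfolding s_def using bdda that by (intro cSup_upper) auto
  have s_nn: "0 \<le> s" using vs[OF FFne] vnn[OF FFne] by simp
  have sapprox: "\<exists>F\<in>FF. s - e < v F" if "e > 0" for e
  proof -
    have "s - e < Sup (v ` FF)" using that unfolding s_def by simp
    then show ?thesis using FFne bdda by (subst (asm) less_cSup_iff) auto
  qed
  have key: "(norm (y - z))\<^sup>2 \<le> 16 * e * (s + e)"
    if "F \<in> FF" "e > 0" "s - e \<le> v F" "y \<in> I F" "z \<in> I F" "norm y \<le> s + e" "norm z \<le> s + e" for F e y z
  proof -
    have "(1/2) *\<^sub>R y + (1/2) *\<^sub>R z \<in> I F" using convexD[OF Icv that(4,5)] by simp
    then have "v F \<le> norm ((1/2) *\<^sub>R y + (1/2) *\<^sub>R z)" by (rule vlow)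
    then show ?thesis using key_bound[OF s_nn that(2,3) vnn[OF that(1)] that(6,7)] by simp
  qed
  define e where "e n = inverse (real (Suc n))" for n
  have epos: "e n > 0" for n unfolding e_def by simp
  have emono: "n \<le> m \<Longrightarrow> e m \<le> e n" for n m unfolding e_def by (simp add: le_imp_inverse_le)
  have "\<forall>n. \<exists>F. F \<in> FF \<and> s - e n < v F" using sapprox epos by blast
  then obtain Fs where Fs: "\<And>n. Fs n \<in> FF" "\<And>n. s - e n < v (Fs n)" by metis
  define Hs where "Hs n = (\<Union>k\<le>n. Fs k)" for n
  have HFF: "Hs n \<in> FF" for n using Fs(1) unfolding Hs_def FF_def by auto
  have Hmono: "n \<le> m \<Longrightarrow> Hs n \<subseteq> Hs m" for n m unfolding Hs_def by (auto intro: le_trans)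
  have Hv: "s - e n < v (Hs n)" for n
  proof -
    have "Fs n \<subseteq> Hs n" unfolding Hs_def by auto
    then show ?thesis using Fs(2)[of n] vmono[OF HFF, of "Fs n" n] by auto
  qed
  have "\<forall>n. \<exists>y. y \<in> I (Hs n) \<and> norm y < v (Hs n) + e n" using vapprox[OF HFF epos] by blast
  then obtain y where y: "\<And>n. y n \<in> I (Hs n)" "\<And>n. norm (y n) < v (Hs n) + e n" by metis
  have ybound: "norm (y n) \<le> s + e n" for n using y(2)[of n] vs[OF HFF, of n] by simp
  define \<beta> where "\<beta> n = sqrt (16 * e n * (s + e n))" for n
  have e0: "e \<longlonglongrightarrow> 0" unfolding e_def by (rule LIMSEQ_inverse_real_of_nat)
  have \<beta>0: "\<beta> \<longlonglongrightarrow> 0"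
  proof -
    have "(\<lambda>n. sqrt (16 * e n * (s + e n))) \<longlonglongrightarrow> sqrt (16 * 0 * (s + 0))"
      by (intro tendsto_intros e0)
    then show ?thesis unfolding \<beta>_def by simp
  qed
  have close: "norm (y n - z) \<le> \<beta> n" if "z \<in> I (Hs n)" "norm z \<le> s + e n" for n z
    unfolding \<beta>_def
    by (rule real_le_rsqrt, rule key[OF HFF epos less_imp_le[OF Hv] y(1) that(1) ybound that(2)])
  have ycl: "norm (y n - y m) \<le> \<beta> n" if "n \<le> m" for n m
  proof -
    have "y m \<in> I (Hs n)" using y(1)[of m] Imono[OF Hmono[OF that]] by blast
    moreover have "norm (y m) \<le> s + e n" using ybound[of m] emono[OF that] by linarith
    ultimately show ?thesis using close by blast
  qed
  have "Cauchy y"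
  proof (rule CauchyI)
    fix \<epsilon> :: real assume "\<epsilon> > 0"
    then have "\<forall>\<^sub>F n in sequentially. \<beta> n < \<epsilon> / 2" using \<beta>0 by (intro order_tendstoD) auto
    then obtain N where N: "\<beta> N < \<epsilon> / 2" by (auto simp: eventually_sequentially)
    show "\<exists>M. \<forall>m\<ge>M. \<forall>n\<ge>M. norm (y m - y n) < \<epsilon>"
    proof (intro exI[of _ N] allI impI)
      fix m n assume "N \<le> m" "N \<le> n"
      have "norm (y m - y n) \<le> norm (y N - y m) + norm (y N - y n)"
        by (metis dist_norm dist_triangle3)
      also have "\<dots> \<le> \<beta> N + \<beta> N" using ycl[OF \<open>N \<le> m\<close>] ycl[OF \<open>N \<le> n\<close>] by simp
      finally show "norm (y m - y n) < \<epsilon>" using N by simp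
    qed
  qed
  then obtain p where p: "y \<longlonglongrightarrow> p" using Cauchy_convergent_iff convergent_def by blast
  have "p \<in> cball (c g) (r g)" if g: "g \<in> G" for g
  proof -
    have "\<forall>n. \<exists>z. z \<in> I (insert g (Hs n)) \<and> norm z < v (insert g (Hs n)) + e n"
      using vapprox[OF FFins[OF HFF g] epos] by blast
    then obtain z where z: "\<And>n. z n \<in> I (insert g (Hs n))" "\<And>n. norm (z n) < v (insert g (Hs n)) + e n" by metis
    have zI: "z n \<in> I (Hs n)" for n using z(1)[of n] Imono[of "Hs n" "insert g (Hs n)"] by auto
    have zb: "norm (z n) \<le> s + e n" for n using z(2)[of n] vs[OF FFins[OF HFF g], of n] by simp
    have zc: "z n \<in> cball (c g) (r g)" for n using z(1)[of n] unfolding I_def by auto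
    have dz: "dist (z n) p \<le> \<beta> n + dist (y n) p" for n
    proof -
      have "dist (z n) p \<le> dist (z n) (y n) + dist (y n) p" by (rule dist_triangle)
      also have "dist (z n) (y n) \<le> \<beta> n" using close[OF zI zb] by (simp add: dist_norm norm_minus_commute)
      finally show ?thesis by simp
    qed
    have yd: "(\<lambda>n. dist (y n) p) \<longlonglongrightarrow> 0" using tendsto_dist_iff[THEN iffD1, OF p] .
    have "(\<lambda>n. \<beta> n + dist (y n) p) \<longlonglongrightarrow> 0 + 0"
      by (rule tendsto_add[OF \<beta>0 yd])
    then have up: "(\<lambda>n. \<beta> n + dist (y n) p) \<longlonglongrightarrow> 0" by simp
    have "(\<lambda>n. dist (z n) p) \<longlonglongrightarrow> 0"
      by (rule tendsto_sandwich[of "\<lambda>_. 0" "\<lambda>n. dist (z n) p" sequentially "\<lambda>n. \<beta> n + dist (y n) p" 0])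
        (simp_all add: dz up)
    then have "z \<longlonglongrightarrow> p" by (rule tendsto_dist_iff[THEN iffD2])
    then show ?thesis by (rule closed_sequentially[OF closed_cball zc])
  qed
  then show ?thesis by blast
qed

lemma ball_char:
  fixes y a b x :: "'a::real_inner"
  shows "inner (y - a) (x - y - b) \<ge> 0 \<longleftrightarrow> y \<in> cball ((1/2) *\<^sub>R (x + a - b)) (norm (x - a - b) / 2)"
proof -
  let ?c = "(1/2) *\<^sub>R (x + a - b)" and ?r = "norm (x - a - b) / 2"
  have id: "(dist ?c y)\<^sup>2 = ?r\<^sup>2 - inner (y - a) (x - y - b)"
    unfolding dist_norm power_divide power2_norm_eq_inner
    by (simp add: inner_add_left inner_add_right inner_diff_left inner_diff_right inner_commute algebra_simps)
      (simp add: field_simps)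
  have "dist ?c y \<le> ?r \<longleftrightarrow> (dist ?c y)\<^sup>2 \<le> ?r\<^sup>2"
    using abs_le_square_iff[of "dist ?c y" ?r] by simp
  then show ?thesis using id by simp
qed

lemma monotone_ext:
  fixes A :: "'a::{real_inner,complete_space} \<Rightarrow> 'a set" and x :: 'a
  assumes mon: "monotone_op A" and lam: "lam > 0"
  shows "\<exists>y. \<forall>a. \<forall>b\<in>A a. inner (y - a) (x - y - lam *\<^sub>R b) \<ge> 0"
proof -
  define G where "G = {(a, lam *\<^sub>R b) | a b. b \<in> A a}"
  have Gmono: "inner (fst g - fst h) (snd g - snd h) \<ge> 0" if gh: "g \<in> G" "h \<in> G" for g h
  proof -
    obtain a b a' b' where g: "g = (a, lam *\<^sub>R b)" "b \<in> A a" and h: "h = (a', lam *\<^sub>R b')" "b' \<in> A a'"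
      using gh unfolding G_def by blast
    have "inner (a - a') (b - b') \<ge> 0" using mon g h unfolding monotone_op_def by blast
    then have "0 \<le> lam * inner (a - a') (b - b')" using lam by simp
    then show ?thesis using g h by (simp add: scaleR_diff_right[symmetric])
  qed
  have "\<exists>y. \<forall>g\<in>G. inner (y - fst g) (x - y - snd g) \<ge> 0"
  proof (cases "G = {}")
    case True then show ?thesis by simp
  next
    case False
    have "(\<Inter>g\<in>G. cball ((1/2) *\<^sub>R (x + fst g - snd g)) (norm (x - fst g - snd g) / 2)) \<noteq> {}"
    proof (rule ball_FIP[OF False])
      fix F assume F: "finite F" "F \<subseteq> G"
      obtain y where "\<forall>g\<in>F. inner (y - fst g) (x - y - snd g) \<ge> 0"
        using finite_ext[OF F(1), of x] Gmono F(2) by blast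
      then have "y \<in> (\<Inter>g\<in>F. cball ((1/2) *\<^sub>R (x + fst g - snd g)) (norm (x - fst g - snd g) / 2))"
        using ball_char by blast
      then show "(\<Inter>g\<in>F. cball ((1/2) *\<^sub>R (x + fst g - snd g)) (norm (x - fst g - snd g) / 2)) \<noteq> {}" by blast
    qed
    then obtain y where "y \<in> (\<Inter>g\<in>G. cball ((1/2) *\<^sub>R (x + fst g - snd g)) (norm (x - fst g - snd g) / 2))" by blast
    then show ?thesis using ball_char by blast
  qed
  then obtain y where y: "\<forall>g\<in>G. inner (y - fst g) (x - y - snd g) \<ge> 0" by blast
  show ?thesis
  proof (intro exI[of _ y] allI ballI)
    fix a b assume "b \<in> A a"
    then have "(a, lam *\<^sub>R b) \<in> G" unfolding G_def by blast
    then show "0 \<le> inner (y - a) (x - y - lam *\<^sub>R b)" using y by auto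
  qed
qed

lemma minty:
  fixes A :: "'a::{real_inner,complete_space} \<Rightarrow> 'a set" and x :: 'a
  assumes mm: "maximal_monotone A" and lam: "lam > 0"
  shows "\<exists>y. \<exists>u\<in>A y. x = y + lam *\<^sub>R u"
proof -
  have mon: "monotone_op A" using mm unfolding maximal_monotone_def by blast
  obtain y where y: "\<And>a b. b \<in> A a \<Longrightarrow> inner (y - a) (x - y - lam *\<^sub>R b) \<ge> 0"
    using monotone_ext[OF mon lam, of x] by blast
  define u where "u = (1/lam) *\<^sub>R (x - y)"
  define B where "B = (\<lambda>z. if z = y then insert u (A y) else A z)"
  have key: "inner (y - a) (u - b) \<ge> 0" if "b \<in> A a" for a b
  proof -
    have "inner (y - a) (u - b) = (1/lam) * inner (y - a) (x - y - lam *\<^sub>R b)"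
      unfolding u_def using lam by (simp add: inner_diff_right algebra_simps)
    then show ?thesis using y[OF that] lam by simp
  qed
  have "monotone_op B"
    unfolding monotone_op_def
  proof (intro allI impI)
    fix p q v w assume pv: "v \<in> B p" and qw: "w \<in> B q"
    show "0 \<le> inner (p - q) (v - w)"
    proof (cases "p = y \<and> v = u")
      case True
      show ?thesis
      proof (cases "q = y \<and> w = u")
        case True then show ?thesis using \<open>p = y \<and> v = u\<close> by simp
      next
        case False
        then have "w \<in> A q" using qw unfolding B_def by (auto split: if_splits)
        then show ?thesis using key True by simp
      qed
    next
      case False
      then have vA: "v \<in> A p" using pv unfolding B_def by (auto split: if_splits)
      show ?thesis
      proof (cases "q = y \<and> w = u")
        case True
        have "inner (p - q) (v - w) = inner (y - p) (u - v)" using True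
          by (metis inner_minus_left inner_minus_right minus_diff_eq)
        then show ?thesis using key[OF vA] by simp
      next
        case False
        then have "w \<in> A q" using qw unfolding B_def by (auto split: if_splits)
        then show ?thesis using mon vA unfolding monotone_op_def by blast
      qed
    qed
  qed
  moreover have "\<forall>z. A z \<subseteq> B z" unfolding B_def by auto
  ultimately have "B = A" using mm unfolding maximal_monotone_def by blast
  then have "u \<in> A y" by (metis B_def insertI1)
  moreover have "x = y + lam *\<^sub>R u" unfolding u_def using lam by simp
  ultimately show ?thesis by blast
qed

lemma resolvent_prop:
  fixes A :: "'a::{real_inner,complete_space} \<Rightarrow> 'a set" and x :: 'a
  assumes mm: "maximal_monotone A" and lam: "lam > 0"
  shows "\<exists>u\<in>A (resolvent A lam x). x = resolvent A lam x + lam *\<^sub>R u"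
proof -
  have mon: "monotone_op A" using mm unfolding maximal_monotone_def by blast
  have uniq: "y1 = y2" if yy: "\<exists>u\<in>A y1. x = y1 + lam *\<^sub>R u" "\<exists>u\<in>A y2. x = y2 + lam *\<^sub>R u" for y1 y2
  proof -
    obtain u1 u2 where u: "u1 \<in> A y1" "x = y1 + lam *\<^sub>R u1" "u2 \<in> A y2" "x = y2 + lam *\<^sub>R u2"
      using yy by blast
    have m: "inner (y1 - y2) (u1 - u2) \<ge> 0" using mon u unfolding monotone_op_def by blast
    have d: "y1 - y2 = - lam *\<^sub>R (u1 - u2)" using u by (simp add: algebra_simps)
    have "- lam * inner (u1 - u2) (u1 - u2) \<ge> 0" using m unfolding d by simp
    then have "inner (u1 - u2) (u1 - u2) \<le> 0" using lam by (simp add: mult_le_0_iff)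
    then have "u1 - u2 = 0" using inner_gt_zero_iff[of "u1 - u2"] by linarith
    then have "u1 = u2" by simp
    then show ?thesis using u by simp
  qed
  have "\<exists>!y. \<exists>u\<in>A y. x = y + lam *\<^sub>R u" using minty[OF mm lam, of x] uniq by blast
  then show ?thesis unfolding resolvent_def by (rule theI')
qed

lemma infdist_sq_ge:
  assumes "Z \<noteq> {}" "a \<ge> 0" "\<And>z. z \<in> Z \<Longrightarrow> a \<le> (dist y z)\<^sup>2"
  shows "a \<le> (infdist y Z)\<^sup>2"
proof -
  have "sqrt a \<le> dist y z" if "z \<in> Z" for z
    using real_sqrt_le_mono[OF assms(3)[OF that]] by simp
  then have "sqrt a \<le> infdist y Z" unfolding infdist_notempty[OF assms(1)]
    using assms(1) by (intro cINF_greatest) auto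
  then have "(sqrt a)\<^sup>2 \<le> (infdist y Z)\<^sup>2" using assms(2) by (intro power_mono) auto
  then show ?thesis using assms(2) by simp
qed

lemma res_alg:
  fixes J x z :: "'a::real_inner"
  assumes "inner (J - z) (x - J) \<ge> 0"
  shows "inner (x - z) (J - x) \<le> - (norm (J - x))\<^sup>2" and "norm (J - x) \<le> norm (x - z)"
proof -
  have e1: "inner (x - z) (J - x) = - (norm (J - x))\<^sup>2 - inner (J - z) (x - J)"
    unfolding power2_norm_eq_inner by (simp add: inner_diff_left inner_diff_right inner_commute algebra_simps)
  then show "inner (x - z) (J - x) \<le> - (norm (J - x))\<^sup>2" using assms by simp
  have e2: "(norm (x - z))\<^sup>2 = (norm (J - x))\<^sup>2 + (norm (J - z))\<^sup>2 + 2 * inner (J - z) (x - J)"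
    unfolding power2_norm_eq_inner by (simp add: inner_diff_left inner_diff_right inner_commute algebra_simps)
  have "(norm (J - x))\<^sup>2 \<le> (norm (x - z))\<^sup>2" unfolding e2 using assms by simp
  then show "norm (J - x) \<le> norm (x - z)" by (rule power2_le_imp_le) simp
qed

lemma hderiv:
  fixes x :: "real \<Rightarrow> 'a::real_inner"
  assumes "(x has_vector_derivative v) (at t within S)"
  shows "((\<lambda>\<tau>. (norm (x \<tau> - z))\<^sup>2) has_derivative (\<lambda>d. d * (2 * inner (x t - z) v))) (at t within S)"
proof -
  have "((\<lambda>\<tau>. inner (x \<tau> - z) (x \<tau> - z)) has_derivative (\<lambda>d. d * (2 * inner (x t - z) v))) (at t within S)"
    using assms unfolding has_vector_derivative_def
    by (auto intro!: derivative_eq_intros simp: inner_commute algebra_simps)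
  then show ?thesis by (simp add: power2_norm_eq_inner)
qed

theorem theorem3p4:
  fixes A :: "'a::{real_inner, complete_space} \<Rightarrow> 'a set"
    and x :: "real \<Rightarrow> 'a" and lam :: "real \<Rightarrow> real"
    and \<theta> :: real and p :: nat and \<delta> \<kappa> :: real
  assumes maxmon: "maximal_monotone A"
    and zeros_ne: "zeros A \<noteq> {}"
    and theta_pos: "\<theta> > 0"
    and p_ge: "p \<ge> 1"
    and lam_pos: "\<And>t. t \<ge> 0 \<Longrightarrow> lam t > 0"
    and lam_cont: "continuous_on {0..} lam"
    and ode: "\<And>t. t \<ge> 0 \<Longrightarrow>
        (x has_vector_derivative (resolvent A (lam t) (x t) - x t)) (at t within {0..})"
    and alg: "\<And>t. t \<ge> 0 \<Longrightarrow>
        lam t * norm (resolvent A (lam t) (x t) - x t) ^ (p - 1) = \<theta>"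
    and x0: "0 \<notin> A (x 0)"
    and delta_pos: "\<delta> > 0" and kappa_pos: "\<kappa> > 0"
    and EB: "\<And>y. A y \<noteq> {} \<Longrightarrow> infdist 0 (A y) \<le> \<delta> \<Longrightarrow>
        infdist y (zeros A) \<le> \<kappa> * infdist 0 (A y)"
  shows "\<exists>t0 > 0. \<exists>c > 0. c \<le> 2 * (1 + \<kappa> / lam 0) powr (-2) \<and>
           (\<exists>M. \<forall>t > t0. infdist (x t) (zeros A) \<le> M * exp (- c * t / 2))"
proof -
  define J where "J t = resolvent A (lam t) (x t)" for t
  define r where "r t = J t - x t" for t
  define Z where "Z = zeros A"
  have mon: "monotone_op A" using maxmon unfolding maximal_monotone_def by blast
  have Jprop: "(1 / lam t) *\<^sub>R (x t - J t) \<in> A (J t)" if t: "t \<ge> 0" for t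
  proof -
    obtain u where u: "u \<in> A (J t)" "x t = J t + lam t *\<^sub>R u"
      using resolvent_prop[OF maxmon lam_pos[OF t], of "x t"] unfolding J_def by blast
    have "(1 / lam t) *\<^sub>R (x t - J t) = u" using u(2) lam_pos[OF t] by simp
    then show ?thesis using u(1) by simp
  qed
  have JZ: "inner (J t - z) (x t - J t) \<ge> 0" if t: "t \<ge> 0" and z: "z \<in> Z" for t z
  proof -
    have "0 \<in> A z" using z unfolding Z_def zeros_def by simp
    then have "inner (J t - z) ((1 / lam t) *\<^sub>R (x t - J t) - 0) \<ge> 0"
      using mon Jprop[OF t] unfolding monotone_op_def by blast
    then have "(1 / lam t) * inner (J t - z) (x t - J t) \<ge> 0" by simp
    then show ?thesis using lam_pos[OF t] by (simp add: zero_le_divide_iff)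
  qed
  have ineq1: "inner (x t - z) (r t) \<le> - (norm (r t))\<^sup>2" if "t \<ge> 0" "z \<in> Z" for t z
    using res_alg(1)[OF JZ[OF that]] unfolding r_def .
  have rle: "norm (r t) \<le> norm (x t - z)" if "t \<ge> 0" "z \<in> Z" for t z
    using res_alg(2)[OF JZ[OF that]] unfolding r_def .
  have hdec: "(norm (x s - z))\<^sup>2 + 2 * C * (s - t) \<le> (norm (x t - z))\<^sup>2"
    if z: "z \<in> Z" and t0: "0 \<le> t" and ts: "t \<le> s" and C: "\<And>\<tau>. t \<le> \<tau> \<Longrightarrow> \<tau> \<le> s \<Longrightarrow> C \<le> (norm (r \<tau>))\<^sup>2"
    for z t s C
  proof -
    define f where "f \<tau> = (norm (x \<tau> - z))\<^sup>2 + 2 * C * \<tau>" for \<tau>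
    have fd: "(f has_derivative (\<lambda>d. d * (2 * inner (x \<tau> - z) (r \<tau>)) + d * (2 * C))) (at \<tau> within {t..s})"
      if "t \<le> \<tau>" "\<tau> \<le> s" for \<tau>
    proof -
      have "\<tau> \<ge> 0" using that t0 by simp
      have "(x has_vector_derivative r \<tau>) (at \<tau> within {t..s})"
        using has_vector_derivative_within_subset[OF ode[OF \<open>\<tau> \<ge> 0\<close>], of "{t..s}"] t0
        unfolding r_def J_def by auto
      from hderiv[OF this, of z] have h1: "((\<lambda>\<tau>. (norm (x \<tau> - z))\<^sup>2) has_derivative (\<lambda>d. d * (2 * inner (x \<tau> - z) (r \<tau>)))) (at \<tau> within {t..s})" .
      have h2: "((\<lambda>\<tau>. 2 * C * \<tau>) has_derivative (\<lambda>d. d * (2 * C))) (at \<tau> within {t..s})"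
        by (auto intro!: derivative_eq_intros)
      show ?thesis unfolding f_def using has_derivative_add[OF h1 h2] by simp
    qed
    have "\<exists>\<xi>\<in>{t..s}. f s - f t = (s - t) * (2 * inner (x \<xi> - z) (r \<xi>)) + (s - t) * (2 * C)"
      using mvt_very_simple[OF ts fd] by simp
    then obtain \<xi> where \<xi>: "\<xi> \<in> {t..s}" "f s - f t = (s - t) * (2 * inner (x \<xi> - z) (r \<xi>)) + (s - t) * (2 * C)"
      by blast
    have "inner (x \<xi> - z) (r \<xi>) \<le> - C" using ineq1[of \<xi> z] C[of \<xi>] \<xi>(1) t0 z by auto
    then have "(s - t) * (2 * inner (x \<xi> - z) (r \<xi>) + 2 * C) \<le> 0"
      using ts by (intro mult_nonneg_nonpos) auto
    then have "(s - t) * (2 * inner (x \<xi> - z) (r \<xi>)) + (s - t) * (2 * C) \<le> 0"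
      by (simp only: distrib_left)
    then have "f s \<le> f t" using \<xi>(2) by linarith
    then show ?thesis unfolding f_def right_diff_distrib by linarith
  qed
  obtain z0 where z0: "z0 \<in> Z" using zeros_ne unfolding Z_def by blast
  define R where "R = norm (x 0 - z0)"
  have Rnn: "R \<ge> 0" unfolding R_def by simp
  have hmono: "norm (x s - z) \<le> norm (x t - z)" if "z \<in> Z" "0 \<le> t" "t \<le> s" for z t s
  proof -
    have "(norm (x s - z))\<^sup>2 \<le> (norm (x t - z))\<^sup>2"
      using hdec[OF that, of 0] by simp
    then show ?thesis by (rule power2_le_imp_le) simp
  qed
  have xb: "norm (x t - z0) \<le> R" if "t \<ge> 0" for t unfolding R_def using hmono[OF z0, of 0 t] that by simp
  have rb: "norm (r t) \<le> R" if "t \<ge> 0" for t using rle[OF that z0] xb[OF that] by simp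
  define \<phi> where "\<phi> t = (infdist (x t) Z)\<^sup>2" for t
  have \<phi>nn: "\<phi> t \<ge> 0" for t unfolding \<phi>_def by simp
  have \<phi>le: "\<phi> t \<le> (norm (x t - z))\<^sup>2" if "z \<in> Z" for t z
  proof -
    have "infdist (x t) Z \<le> norm (x t - z)" using infdist_le[OF that, of "x t"] by (simp add: dist_norm)
    then show ?thesis unfolding \<phi>_def by (intro power_mono) (auto simp: infdist_nonneg)
  qed
  have \<phi>R: "\<phi> t \<le> R\<^sup>2" if "t \<ge> 0" for t
    using \<phi>le[OF z0, of t] power_mono[OF xb[OF that], of 2] by simp
  have \<phi>anti: "\<phi> s \<le> \<phi> t" if "0 \<le> t" "t \<le> s" for t s
    unfolding \<phi>_def
  proof (rule infdist_sq_ge)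
    show "Z \<noteq> {}" using z0 by blast
    show "0 \<le> (infdist (x s) Z)\<^sup>2" by simp
    fix z assume z: "z \<in> Z"
    have "(infdist (x s) Z)\<^sup>2 \<le> (norm (x s - z))\<^sup>2" using \<phi>le[OF z] unfolding \<phi>_def by simp
    also have "\<dots> \<le> (norm (x t - z))\<^sup>2" using hmono[OF z that] by (intro power_mono) auto
    finally show "(infdist (x s) Z)\<^sup>2 \<le> (dist (x t) z)\<^sup>2" by (simp add: dist_norm)
  qed
  define lm where "lm = \<theta> / (R + 1) ^ (p - 1)"
  have lm_pos: "lm > 0" unfolding lm_def using theta_pos Rnn by simp
  have lamlb: "lm \<le> lam t" if t: "t \<ge> 0" for t
  proof -
    have a: "lam t * (norm (r t)) ^ (p - 1) = \<theta>" using alg[OF t] unfolding r_def J_def .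
    have "(norm (r t)) ^ (p - 1) \<le> (R + 1) ^ (p - 1)" using rb[OF t] by (intro power_mono) auto
    then have "lam t * (norm (r t)) ^ (p - 1) \<le> lam t * (R + 1) ^ (p - 1)"
      using lam_pos[OF t] by (intro mult_left_mono) auto
    then have "\<theta> \<le> lam t * (R + 1) ^ (p - 1)" using a by simp
    then show ?thesis unfolding lm_def using Rnn by (simp add: pos_divide_le_eq)
  qed
  define c1 where "c1 = min (1 / (1 + \<kappa> / lm)\<^sup>2) ((\<delta> * lm)\<^sup>2 / (R\<^sup>2 + 1))"
  have kl: "1 + \<kappa> / lm > 0" using lm_pos kappa_pos by (simp add: add_pos_pos)
  have c1pos: "c1 > 0"
  proof -
    have a1: "1 + \<kappa> / lm > 0" by (rule kl)
    have a2: "R\<^sup>2 + 1 > 0" by (simp add: add_nonneg_pos)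
    have a3: "(\<delta> * lm)\<^sup>2 > 0" using lm_pos delta_pos by simp
    show ?thesis unfolding c1_def using a1 a2 a3 by simp
  qed
  have key: "c1 * \<phi> t \<le> (norm (r t))\<^sup>2" if t: "t \<ge> 0" for t
  proof (cases "norm (r t) / lam t \<le> \<delta>")
    case True
    define n where "n = norm (r t)"
    have lp: "lam t > 0" using lam_pos[OF t] .
    have uA: "(1 / lam t) *\<^sub>R (x t - J t) \<in> A (J t)" using Jprop[OF t] .
    have nu: "norm ((1 / lam t) *\<^sub>R (x t - J t)) = n / lam t"
      unfolding n_def r_def using lp by (simp add: norm_minus_commute)
    have i0: "infdist 0 (A (J t)) \<le> n / lam t"
      using infdist_le[OF uA, of 0] nu by simp
    have ne: "A (J t) \<noteq> {}" using uA by blast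
    have "infdist (J t) Z \<le> \<kappa> * infdist 0 (A (J t))"
      using EB[OF ne] i0 True unfolding Z_def n_def by simp
    also have "\<dots> \<le> \<kappa> * (n / lam t)" using i0 kappa_pos by (intro mult_left_mono) auto
    also have "\<dots> \<le> \<kappa> * (n / lm)"
      using lamlb[OF t] lm_pos kappa_pos unfolding n_def
      by (intro mult_left_mono divide_left_mono) auto
    finally have iJ: "infdist (J t) Z \<le> \<kappa> * (n / lm)" .
    have "infdist (x t) Z \<le> infdist (J t) Z + dist (x t) (J t)" by (rule infdist_triangle)
    also have "dist (x t) (J t) = n" unfolding n_def r_def by (simp add: dist_norm norm_minus_commute)
    finally have "infdist (x t) Z \<le> (1 + \<kappa> / lm) * n" using iJ by (simp add: algebra_simps)
    then have "\<phi> t \<le> ((1 + \<kappa> / lm) * n)\<^sup>2" unfolding \<phi>_def by (intro power_mono) (auto simp: infdist_nonneg)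
    then have "\<phi> t \<le> (1 + \<kappa> / lm)\<^sup>2 * n\<^sup>2" by (simp add: power_mult_distrib)
    moreover have pp: "(1 + \<kappa> / lm)\<^sup>2 > 0" using kl by simp
    ultimately have "\<phi> t / (1 + \<kappa> / lm)\<^sup>2 \<le> n\<^sup>2" by (simp add: divide_le_eq mult.commute)
    moreover have "c1 * \<phi> t \<le> (1 / (1 + \<kappa> / lm)\<^sup>2) * \<phi> t" unfolding c1_def using \<phi>nn
      by (intro mult_right_mono) auto
    ultimately show ?thesis unfolding n_def by simp
  next
    case False
    have lp: "lam t > 0" using lam_pos[OF t] .
    have "\<delta> * lam t < norm (r t)" using False lp by (simp add: not_le pos_less_divide_eq)
    moreover have "\<delta> * lm \<le> \<delta> * lam t" using lamlb[OF t] delta_pos by simp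
    ultimately have "\<delta> * lm \<le> norm (r t)" by simp
    then have big: "(\<delta> * lm)\<^sup>2 \<le> (norm (r t))\<^sup>2" using delta_pos lm_pos by (intro power_mono) auto
    have "c1 * \<phi> t \<le> ((\<delta> * lm)\<^sup>2 / (R\<^sup>2 + 1)) * \<phi> t" unfolding c1_def using \<phi>nn
      by (intro mult_right_mono) auto
    also have "\<dots> \<le> ((\<delta> * lm)\<^sup>2 / (R\<^sup>2 + 1)) * (R\<^sup>2 + 1)" using \<phi>R[OF t]
      by (intro mult_left_mono) auto
    also have "\<dots> = (\<delta> * lm)\<^sup>2"
    proof -
      have "R\<^sup>2 + 1 \<noteq> 0" by (metis add_nonneg_pos zero_le_power2 zero_less_one less_irrefl)
      then show ?thesis by simp
    qed
    finally show ?thesis using big by simp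
  qed
  have step: "\<phi> (t + 1) * (1 + 2 * c1) \<le> \<phi> t" if t: "t \<ge> 0" for t
    unfolding \<phi>_def
  proof (rule infdist_sq_ge)
    show "Z \<noteq> {}" using z0 by blast
    show "0 \<le> (infdist (x (t + 1)) Z)\<^sup>2 * (1 + 2 * c1)" using c1pos by simp
    fix z assume z: "z \<in> Z"
    have C: "c1 * \<phi> (t + 1) \<le> (norm (r \<tau>))\<^sup>2" if "t \<le> \<tau>" "\<tau> \<le> t + 1" for \<tau>
    proof -
      have "c1 * \<phi> (t + 1) \<le> c1 * \<phi> \<tau>" using \<phi>anti[of \<tau> "t + 1"] that t c1pos by (intro mult_left_mono) auto
      also have "\<dots> \<le> (norm (r \<tau>))\<^sup>2" using key[of \<tau>] that t by simp
      finally show ?thesis .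
    qed
    have "(norm (x (t + 1) - z))\<^sup>2 + 2 * (c1 * \<phi> (t + 1)) * (t + 1 - t) \<le> (norm (x t - z))\<^sup>2"
      by (rule hdec[OF z t _ C]) auto
    moreover have "\<phi> (t + 1) \<le> (norm (x (t + 1) - z))\<^sup>2" by (rule \<phi>le[OF z])
    ultimately have "\<phi> (t + 1) * (1 + 2 * c1) \<le> (norm (x t - z))\<^sup>2" by (simp add: algebra_simps)
    then show "(infdist (x (t + 1)) Z)\<^sup>2 * (1 + 2 * c1) \<le> (dist (x t) z)\<^sup>2"
      unfolding \<phi>_def by (simp add: dist_norm)
  qed
  have iter: "\<phi> (real n) * (1 + 2 * c1) ^ n \<le> R\<^sup>2" for n
  proof (induction n)
    case 0 then show ?case using \<phi>R[of 0] by simp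
  next
    case (Suc n)
    have "\<phi> (real (Suc n)) * (1 + 2 * c1) ^ Suc n = (\<phi> (real n + 1) * (1 + 2 * c1)) * (1 + 2 * c1) ^ n"
      by (simp add: algebra_simps)
    also have "\<dots> \<le> \<phi> (real n) * (1 + 2 * c1) ^ n"
      using step[of "real n"] c1pos by (intro mult_right_mono) auto
    finally show ?case using Suc.IH by simp
  qed
  define L where "L = ln (1 + 2 * c1)"
  have Lpos: "L > 0" unfolding L_def using c1pos by simp
  have eL: "exp L = 1 + 2 * c1" unfolding L_def using c1pos by simp
  define c where "c = min (2 * (1 + \<kappa> / lam 0) powr (-2)) L"
  have kl0: "1 + \<kappa> / lam 0 > 0" using lam_pos[of 0] kappa_pos by (simp add: add_pos_pos)
  have cpos: "c > 0" unfolding c_def using Lpos kl0 by simp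
  define M where "M = R * (1 + 2 * c1)"
  have cle: "c \<le> 2 * (1 + \<kappa> / lam 0) powr (-2)" unfolding c_def by simp
  have main: "\<forall>t>1. infdist (x t) (zeros A) \<le> M * exp (- c * t / 2)"
  proof (intro allI impI)
    fix t :: real assume t1: "1 < t"
    define n where "n = nat \<lfloor>t\<rfloor>"
    have nt: "real n \<le> t" and tn: "t < real n + 1" unfolding n_def using t1 by linarith+
    have "\<phi> t \<le> \<phi> (real n)" using \<phi>anti[OF _ nt] by simp
    also have "\<phi> (real n) \<le> R\<^sup>2 / (1 + 2 * c1) ^ n"
      using iter[of n] c1pos by (simp add: pos_le_divide_eq)
    also have "(1 + 2 * c1) ^ n = exp (real n * L)" using eL by (simp add: exp_of_nat_mult)
    also have "R\<^sup>2 / exp (real n * L) = R\<^sup>2 * exp (- (real n * L))" by (simp add: exp_minus field_simps)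
    also have "\<dots> \<le> R\<^sup>2 * exp (- ((t - 1) * L))"
      using tn Lpos by (intro mult_left_mono) (auto intro!: mult_right_mono)
    also have "R\<^sup>2 * exp (- ((t - 1) * L)) = R\<^sup>2 * exp L * exp (- (t * L))"
      by (simp add: exp_add[symmetric] algebra_simps)
    also have "\<dots> \<le> R\<^sup>2 * exp L * exp (- (c * t))"
      using t1 unfolding c_def by (intro mult_left_mono) (auto intro!: mult_right_mono simp: mult.commute)
    also have "\<dots> \<le> R\<^sup>2 * ((1 + 2 * c1)\<^sup>2 * exp (- (c * t)))"
    proof -
      have "exp L \<le> (1 + 2 * c1)\<^sup>2" unfolding eL using c1pos by (simp add: power2_eq_square)
      then have "exp L * exp (- (c * t)) \<le> (1 + 2 * c1)\<^sup>2 * exp (- (c * t))"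
        by (intro mult_right_mono) auto
      then show ?thesis by (simp add: mult.assoc mult_left_mono)
    qed
    also have "\<dots> = (M * exp (- c * t / 2))\<^sup>2"
      unfolding M_def by (simp add: power_mult_distrib power2_eq_square exp_add[symmetric])
    finally have "(infdist (x t) (zeros A))\<^sup>2 \<le> (M * exp (- c * t / 2))\<^sup>2" unfolding \<phi>_def Z_def .
    then show "infdist (x t) (zeros A) \<le> M * exp (- c * t / 2)"
      by (rule power2_le_imp_le) (use Rnn c1pos in \<open>simp add: M_def\<close>)
  qed
  have one: "(0::real) < 1" by simp
  show ?thesis using one cpos cle main by blast
qed

end
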